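(* In the troll-farm voting model described in the context, fix an information structure $(F_0,F_1)$ and a type distribution $H$ with $H(\tfrac12)<\tfrac12$, and suppose that under $H$ the government wins the election in both states when the sender plays optimally, i.e. $V_0^*(H)\ge\tfrac12$ and $V_1^*(H)\ge\tfrac12$. Then there exists a type distribution $\hat H$ (a cdf with a density with full support on $\mathbb{R}$) that admits greater polarisation than $H$ and under which the election aggregates information, i.e. $V_0^*(\hat H)<\tfrac12\le V_1^*(\hat H)$.
   Context: Model. There is an unknown state $\theta\in\{0,1\}$, each state having prior probability $\tfrac12$. There is a continuum of voters of mass one; each voter has a type $x\in\mathbb{R}$, types being distributed according to a cdf $H$ with density $h$ having full support on $\mathbb{R}$. A voter of type $x$ who votes for the government receives payoff $1-x$ if $\theta=1$ and $-x$ if $\theta=0$; voting against gives payoff $0$. In state $\theta$, each voter independently draws an informative signal $s\in\mathbb{R}$ from a cdf $F_\theta$ with density $f_\theta$ having full support on $\mathbb{R}$, where $f_0(0)=f_1(0)$ and $m(s)=f_1(s)/f_0(s)$ is strictly increasing. For $x\in(0,1)$ let $s^*(x)=m^{-1}\!\left(\frac{x}{1-x}\right)$. A sender chooses, for each type $x$, $\alpha_x\in[0,1]$ (mass of trolls) and a probability distribution $\tilde F_x$ with density $\tilde f_x$ (trolls' messages, not depending on the state). A voter of type $x$ observes, with probability $1-\alpha_x$, her informative signal, and with probability $\alpha_x$ a message drawn from $\tilde F_x$, without knowing which; after observing $s$ her posterior is $$\pi_x(s)=\frac{(1-\alpha_x)f_1(s)+\alpha_x\tilde f_x(s)}{(1-\alpha_x)f_1(s)+\alpha_x\tilde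 f_x(s)+(1-\alpha_x)f_0(s)+\alpha_x\tilde f_x(s)},$$ and she votes for the government iff $\pi_x(s)\ge x$. Her probability of voting for the government in state $\theta$ is $p_\theta(x)=\int_{\{s:\pi_x(s)\ge x\}}[(1-\alpha_x)f_\theta(s)+\alpha_x\tilde f_x(s)]\,ds$, and the vote share is $V_\theta=\int p_\theta(x)\,dH(x)$. The sender's payoff is $u(V_\theta)$, $u$ strictly increasing; she maximises $\tfrac12u(V_0)+\tfrac12u(V_1)$, and among choices with the same vote shares in both states prefers pointwise-smaller $\alpha$ (strictly smaller for some $x$). $V_\theta^*(H)$ denotes the vote share in state $\theta$ under the sender's optimal strategy when the type distribution is $H$; it equals $V_0^*(H)=H(\tfrac12)+\int_{1/2}^{1}\frac{F_0[s^*(x)]-F_1[s^*(x)]}{xF_0[s^*(x)]-(1-x)F_1[s^*(x)]}(1-x)\,dH(x)$ and $V_1^*(H)=H(\tfrac12)+\int_{1/2}^{1}\frac{F_0[s^*(x)]-F_1[s^*(x)]}{xF_0[s^*(x)]-(1-x)F_1[s^*(x)]}\,x\,dH(x)$. The government wins in state $\theta$ iff its vote share is at least $\tfrac12$; the election aggregates information iff the government wins in state $1$ and not in state $0$. Definition (polarisation): a distribution $\hat H$ admits greater polarisation than $H$ iff $\hat H(x)\ge H(x)$ for all $x\le\tfrac12$ and $\hat H(x)\le H(x)$ for all $x\ge\tfrac12$. *)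

theory Defs
  imports "HOL-Analysis.Analysis"
begin

definition cdf_with_density :: "(real \<Rightarrow> real) \<Rightarrow> (real \<Rightarrow> real) \<Rightarrow> bool" where
  "cdf_with_density F f \<longleftrightarrow>
     (\<forall>x. 0 < f x) \<and> (f has_integral 1) UNIV \<and> (\<forall>x. (f has_integral F x) {..x})"

definition lik_ratio :: "(real \<Rightarrow> real) \<Rightarrow> (real \<Rightarrow> real) \<Rightarrow> real \<Rightarrow> real" where
  "lik_ratio f0 f1 s = f1 s / f0 s"

definition info_structure ::
  "(real \<Rightarrow> real) \<Rightarrow> (real \<Rightarrow> real) \<Rightarrow> (real \<Rightarrow> real) \<Rightarrow> (real \<Rightarrow> real) \<Rightarrow> bool" where
  "info_structure F0 F1 f0 f1 \<longleftrightarrow>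
     cdf_with_density F0 f0 \<and> cdf_with_density F1 f1 \<and> f0 0 = f1 0 \<and>
     strict_mono (lik_ratio f0 f1)"

definition s_star :: "(real \<Rightarrow> real) \<Rightarrow> (real \<Rightarrow> real) \<Rightarrow> real \<Rightarrow> real" where
  "s_star f0 f1 x = inv (lik_ratio f0 f1) (x / (1 - x))"

definition kappa ::
  "(real \<Rightarrow> real) \<Rightarrow> (real \<Rightarrow> real) \<Rightarrow> (real \<Rightarrow> real) \<Rightarrow> (real \<Rightarrow> real) \<Rightarrow> real \<Rightarrow> real" where
  "kappa F0 F1 f0 f1 x =
     (let s = s_star f0 f1 x in (F0 s - F1 s) / (x * F0 s - (1 - x) * F1 s))"

text \<open>Optimal vote shares; dH(x) = h(x) dx since H has density h.\<close>
definition V0_star ::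
  "(real \<Rightarrow> real) \<Rightarrow> (real \<Rightarrow> real) \<Rightarrow> (real \<Rightarrow> real) \<Rightarrow> (real \<Rightarrow> real)
   \<Rightarrow> (real \<Rightarrow> real) \<Rightarrow> (real \<Rightarrow> real) \<Rightarrow> real" where
  "V0_star F0 F1 f0 f1 H h =
     H (1/2) + integral {1/2..1} (\<lambda>x. kappa F0 F1 f0 f1 x * (1 - x) * h x)"

definition V1_star ::
  "(real \<Rightarrow> real) \<Rightarrow> (real \<Rightarrow> real) \<Rightarrow> (real \<Rightarrow> real) \<Rightarrow> (real \<Rightarrow> real)
   \<Rightarrow> (real \<Rightarrow> real) \<Rightarrow> (real \<Rightarrow> real) \<Rightarrow> real" where
  "V1_star F0 F1 f0 f1 H h =
     H (1/2) + integral {1/2..1} (\<lambda>x. kappa F0 F1 f0 f1 x * x * h x)"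

definition greater_polarisation :: "(real \<Rightarrow> real) \<Rightarrow> (real \<Rightarrow> real) \<Rightarrow> bool" where
  "greater_polarisation Hh H \<longleftrightarrow>
     (\<forall>x. x \<le> 1/2 \<longrightarrow> H x \<le> Hh x) \<and> (\<forall>x. 1/2 \<le> x \<longrightarrow> Hh x \<le> H x)"

end

theory Submission
  imports Defs
begin

lemma strict_pos_aux:
  fixes f :: "real \<Rightarrow> real"
  assumes int: "(f has_integral i) {a..b}" and ab: "a < b" and pos: "\<And>x. x \<in> {a..b} \<Longrightarrow> 0 < f x"
  shows "0 < i"
proof (rule ccontr)
  assume "\<not> 0 < i"
  moreover have "0 \<le> i" using has_integral_nonneg[OF int] pos by (meson less_le)
  ultimately have i0: "i = 0" by simp
  have intl: "f integrable_on {a..b}" using int by blast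
  have af: "f absolutely_integrable_on {a..b}"
    using pos by (intro absolutely_integrable_onI intl integrable_eq[OF intl]) (simp add: less_imp_le)
  have "set_lebesgue_integral lebesgue {a..b} f = integral {a..b} f"
    by (intro set_lebesgue_integral_eq_integral(2) af)
  also have "\<dots> = 0" using int i0 by blast
  finally have "set_lebesgue_integral lebesgue {a..b} f = 0" .
  then have "AE x in lebesgue. indicator {a..b} x *\<^sub>R f x = 0"
    unfolding set_lebesgue_integral_def
    by (subst (asm) integral_nonneg_eq_0_iff_AE) (use af pos in \<open>auto simp: set_integrable_def indicator_def less_imp_le\<close>)
  then have "AE x in lebesgue. x \<notin> {a..b}"
    by eventually_elim (metis atLeastAtMost_iff indicator_simps(1) less_irrefl pos scaleR_one)
  then have "{x \<in> space lebesgue. \<not> x \<notin> {a..b}} \<in> null_sets lebesgue"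
    by (subst (asm) AE_iff_null) auto
  then have "{a..b} \<in> null_sets lebesgue" by (simp add: atLeastAtMost_def atLeast_def atMost_def Int_def)
  then have "negligible {a..b}" by (simp add: negligible_iff_null_sets)
  then have "box a b = {}" using negligible_interval(1)[of a b] by (simp add: cbox_interval)
  then show False using ab by (simp add: box_real(1))
qed

lemma strict_pos_open:
  fixes f :: "real \<Rightarrow> real"
  assumes int: "(f has_integral i) {a..b}" and ab: "a < b" and pos: "\<And>x. x \<in> {a<..<b} \<Longrightarrow> 0 < f x"
  shows "0 < i"
proof -
  let ?g = "\<lambda>x. if x \<in> {a<..<b} then f x else 1"
  have "(?g has_integral i) {a..b}"
    by (rule has_integral_spike[OF _ _ int, of "{a,b}"]) auto
  then show ?thesis
    by (rule strict_pos_aux[OF _ ab]) (use pos in auto)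
qed

lemma piece_int:
  fixes g G :: "real \<Rightarrow> real"
  assumes G: "\<And>x. (g has_integral G x) {..x}" and gi: "g integrable_on UNIV" and ab: "a \<le> b"
  shows "(g has_integral (G b - G a)) {a..b}"
proof -
  have "g integrable_on {a..b}" by (rule integrable_on_subinterval[OF gi]) auto
  then have J: "(g has_integral integral {a..b} g) {a..b}" by (simp add: has_integral_integral)
  have "negligible ({..a} \<inter> {a..b})"
  proof -
    have "{..a} \<inter> {a..b} = {a}" using ab by auto
    then show ?thesis by simp
  qed
  moreover have "{..a} \<union> {a..b} = {..b}" using ab by auto
  ultimately have "(g has_integral (G a + integral {a..b} g)) {..b}"
    using has_integral_Un[OF G[of a] J] by metis
  then have "G b = G a + integral {a..b} g" using G[of b] by (metis has_integral_unique)
  then show ?thesis using J by simp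
qed

lemma tail_int:
  fixes g G :: "real \<Rightarrow> real"
  assumes G: "\<And>x. (g has_integral G x) {..x}" and T: "(g has_integral T) UNIV"
  shows "(g has_integral (T - G a)) {a<..}"
proof -
  have r: "((\<lambda>x. if x \<in> {..a} then g x else 0) has_integral G a) UNIV"
    using G[of a] has_integral_restrict_UNIV by blast
  have "((\<lambda>x. g x - (if x \<in> {..a} then g x else 0)) has_integral (T - G a)) UNIV"
    by (rule has_integral_diff[OF T r])
  moreover have "(\<lambda>x. g x - (if x \<in> {..a} then g x else 0)) = (\<lambda>x. if x \<in> {a<..} then g x else 0)"
    by (auto simp: fun_eq_iff)
  ultimately have "((\<lambda>x. if x \<in> {a<..} then g x else 0) has_integral (T - G a)) UNIV" by simp
  then show ?thesis by (simp only: has_integral_restrict_UNIV)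
qed

lemma union_int:
  fixes g :: "real \<Rightarrow> real"
  assumes "(g has_integral i) {..a}" "(g has_integral j) {a..b}" "a \<le> b"
  shows "(g has_integral (i + j)) {..b}"
proof -
  have "negligible ({..a} \<inter> {a..b})"
  proof -
    have "{..a} \<inter> {a..b} = {a}" using assms(3) by auto
    then show ?thesis by simp
  qed
  moreover have "{..a} \<union> {a..b} = {..b}" using assms(3) by auto
  ultimately show ?thesis using has_integral_Un[OF assms(1,2)] by metis
qed

lemma kappa_pos:
  assumes info: "info_structure F0 F1 f0 f1"
    and sstar_defined: "\<forall>t>0. \<exists>s. lik_ratio f0 f1 s = t"
    and x: "1/2 < x" "x < 1"
  shows "0 < kappa F0 F1 f0 f1 x"
proof -
  let ?m = "lik_ratio f0 f1"
  have c0: "cdf_with_density F0 f0" and c1: "cdf_with_density F1 f1" and e0: "f0 0 = f1 0"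
    and sm: "strict_mono ?m" using info by (auto simp: info_structure_def)
  have f0p: "\<And>u. 0 < f0 u" and f1p: "\<And>u. 0 < f1 u"
    and F0: "\<And>u. (f0 has_integral F0 u) {..u}" and F1: "\<And>u. (f1 has_integral F1 u) {..u}"
    and T0: "(f0 has_integral 1) UNIV" and T1: "(f1 has_integral 1) UNIV"
    using c0 c1 by (auto simp: cdf_with_density_def)
  have m0: "?m 0 = 1" using e0 f0p[of 0] by (simp add: lik_ratio_def)
  define t where "t = x / (1 - x)"
  have t1: "1 < t" using x by (simp add: t_def field_simps)
  obtain s where ms: "?m s = t" using sstar_defined t1 by force
  have inj: "inj ?m" using sm by (rule strict_mono_imp_inj_on)
  have ss: "s_star f0 f1 x = s" unfolding s_star_def t_def[symmetric] ms[symmetric]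
    by (rule inv_f_f[OF inj])
  have spos: "0 < s"
  proof (rule ccontr)
    assume "\<not> 0 < s"
    then have "?m s \<le> ?m 0" using sm by (simp add: strict_mono_less_eq)
    then show False using ms m0 t1 by simp
  qed
  have gpos: "f0 u < f1 u" if "0 < u" for u
  proof -
    have "?m 0 < ?m u" using sm that by (simp add: strict_mono_less)
    then have "1 < f1 u / f0 u" using m0 by (simp add: lik_ratio_def)
    then show ?thesis using f0p[of u] by (simp add: field_simps)
  qed
  let ?g = "\<lambda>u. f1 u - f0 u" and ?G = "\<lambda>u. F1 u - F0 u"
  have G: "\<And>u. (?g has_integral ?G u) {..u}" using F0 F1 by (intro has_integral_diff)
  have T: "(?g has_integral 0) UNIV" using has_integral_diff[OF T1 T0] by simp
  have gi: "?g integrable_on UNIV" using T by blast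
  have p1: "0 < ?G (s+1) - ?G s"
    by (rule strict_pos_open[OF piece_int[OF G gi]]) (use spos gpos in auto)
  have p2: "0 \<le> 0 - ?G (s+1)"
    by (rule has_integral_nonneg[OF tail_int[OF G T]]) (use spos gpos in \<open>auto simp: less_imp_le\<close>)
  have F01: "F1 s < F0 s" using p1 p2 by simp
  have F1n: "0 \<le> F1 s" by (rule has_integral_nonneg[OF F1]) (simp add: less_imp_le f1p)
  have "(1 - x) * F1 s < (1 - x) * F0 s" using F01 x by simp
  moreover have "x * F0 s - (1 - x) * F0 s = (2 * x - 1) * F0 s" by (simp add: algebra_simps)
  moreover have "0 < (2 * x - 1) * F0 s" using F01 F1n x by (intro mult_pos_pos) auto
  ultimately have den: "0 < x * F0 s - (1 - x) * F1 s" by linarith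
  show ?thesis unfolding kappa_def Let_def ss using den F01 by simp
qed


theorem proposition3:
  fixes F0 F1 f0 f1 H h :: "real \<Rightarrow> real"
  assumes info: "info_structure F0 F1 f0 f1"
    and sstar_defined: "\<forall>t>0. \<exists>s. lik_ratio f0 f1 s = t"
    and typeH: "cdf_with_density H h"
    and H_half: "H (1/2) < 1/2"
    and win0: "V0_star F0 F1 f0 f1 H h \<ge> 1/2"
    and win1: "V1_star F0 F1 f0 f1 H h \<ge> 1/2"
  shows "\<exists>Hh hh. cdf_with_density Hh hh \<and> greater_polarisation Hh H \<and>
           V0_star F0 F1 f0 f1 Hh hh < 1/2 \<and> 1/2 \<le> V1_star F0 F1 f0 f1 Hh hh"
proof -
  have hp: "\<And>x. 0 < h x" and T: "(h has_integral 1) UNIV" and Hx: "\<And>x. (h has_integral H x) {..x}"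
    using typeH by (auto simp: cdf_with_density_def)
  have hi: "h integrable_on UNIV" using T by blast
  define k where "k = kappa F0 F1 f0 f1"
  define I0 where "I0 = integral {1/2..1} (\<lambda>x. k x * (1 - x) * h x)"
  define I1 where "I1 = integral {1/2..1} (\<lambda>x. k x * x * h x)"
  define c where "c = 1/2 - H (1/2)"
  have cpos: "0 < c" using H_half by (simp add: c_def)
  have I0c: "c \<le> I0" using win0 by (simp add: V0_star_def c_def I0_def k_def)
  have I1c: "c \<le> I1" using win1 by (simp add: V1_star_def c_def I1_def k_def)
  have i0: "(\<lambda>x. k x * (1 - x) * h x) integrable_on {1/2..1}"
    using I0c cpos not_integrable_integral unfolding I0_def by fastforce
  have i1: "(\<lambda>x. k x * x * h x) integrable_on {1/2..1}"
    using I1c cpos not_integrable_integral unfolding I1_def by fastforce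
  have "((\<lambda>x. k x * x * h x - k x * (1 - x) * h x) has_integral (I1 - I0)) {1/2..1}"
    unfolding I0_def I1_def by (intro has_integral_diff) (use i0 i1 in \<open>simp_all add: has_integral_integral\<close>)
  then have I01: "0 < I1 - I0"
  proof (rule strict_pos_open)
    fix x :: real assume x: "x \<in> {1/2<..<1}"
    have "k x * x * h x - k x * (1 - x) * h x = k x * ((2 * x - 1) * h x)" by (simp add: algebra_simps)
    moreover have "0 < k x" unfolding k_def by (rule kappa_pos[OF info sstar_defined]) (use x in auto)
    moreover have "0 < (2 * x - 1) * h x" using x hp[of x] by (intro mult_pos_pos) auto
    ultimately show "0 < k x * x * h x - k x * (1 - x) * h x" by simp
  qed simp
  define lam where "lam = c / I1"
  have I1pos: "0 < I1" using I1c cpos by linarith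
  have lampos: "0 < lam" using cpos I1pos by (simp add: lam_def)
  have lam1: "lam \<le> 1" using I1c I1pos by (simp add: lam_def)
  have lamI1: "lam * I1 = c" using I1pos by (simp add: lam_def)
  have "lam * I0 < lam * I1" using I01 lampos by (intro mult_strict_left_mono) auto
  then have lamI0: "lam * I0 < c" using lamI1 by simp
  have Hmono: "H a \<le> H b" if "a \<le> b" for a b
    using has_integral_nonneg[OF piece_int[OF Hx hi that]] hp by (simp add: less_imp_le)
  have tail: "\<And>a. (h has_integral (1 - H a)) {a<..}" by (rule tail_int[OF Hx T])
  have Hle1: "H a \<le> 1" for a using has_integral_nonneg[OF tail[of a]] hp by (simp add: less_imp_le)
  have H1lt: "H 1 < 1"
  proof -
    have "0 < H 2 - H 1" by (rule strict_pos_open[OF piece_int[OF Hx hi]]) (use hp in auto)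
    then show ?thesis using Hle1[of 2] by simp
  qed
  define D where "D = (1 - lam) * (H 1 - H (1/2))"
  have D0: "0 \<le> D" unfolding D_def using lam1 Hmono[of "1/2" 1] by simp
  define mu where "mu = 1 + D / (1 - H 1)"
  have mu1: "1 \<le> mu" using D0 H1lt by (simp add: mu_def)
  have muT: "mu * (1 - H 1) = (1 - H 1) + D" using H1lt by (simp add: mu_def field_simps)
  define w where "w x = (if x \<le> 1/2 then 1 else if x \<le> 1 then lam else mu)" for x :: real
  define hh where "hh x = h x * w x" for x
  define Hh where "Hh x = (if x \<le> 1/2 then H x else if x \<le> 1 then H (1/2) + lam * (H x - H (1/2))
      else H (1/2) + lam * (H 1 - H (1/2)) + mu * (H x - H 1))" for x
  have wpos: "0 < w x" for x using lampos mu1 by (simp add: w_def)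
  have hhpos: "0 < hh x" for x using wpos[of x] hp[of x] by (simp add: hh_def)
  have A: "(hh has_integral Hh x) {..x}" if "x \<le> 1/2" for x
  proof -
    have "(hh has_integral H x) {..x}"
      by (rule has_integral_eq[OF _ Hx[of x]]) (use that in \<open>auto simp: hh_def w_def\<close>)
    then show ?thesis using that by (simp add: Hh_def)
  qed
  have B: "(hh has_integral Hh x) {..x}" if "1/2 \<le> x" "x \<le> 1" for x
  proof -
    have p: "(hh has_integral (H x - H (1/2)) * lam) {1/2..x}"
      by (rule has_integral_spike[OF negligible_sing[of "1/2"] _ has_integral_mult_left[OF piece_int[OF Hx hi that(1)]]])
         (use that in \<open>auto simp: hh_def w_def\<close>)
    have "(hh has_integral (Hh (1/2) + (H x - H (1/2)) * lam)) {..x}"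
      by (rule union_int[OF A[of "1/2"] p that(1)]) simp
    then show ?thesis using that A[of x] by (cases "x \<le> 1/2") (auto simp: Hh_def algebra_simps)
  qed
  have C: "(hh has_integral Hh x) {..x}" if "1 < x" for x
  proof -
    have p: "(hh has_integral (H x - H 1) * mu) {1..x}"
      by (rule has_integral_spike[OF negligible_sing[of "1"] _ has_integral_mult_left[OF piece_int[OF Hx hi]]])
         (use that in \<open>auto simp: hh_def w_def\<close>)
    have "(hh has_integral (Hh 1 + (H x - H 1) * mu)) {..x}"
      by (rule union_int[OF B[of 1] p]) (use that in auto)
    then show ?thesis using that by (auto simp: Hh_def algebra_simps)
  qed
  have Hhint: "(hh has_integral Hh x) {..x}" for x
  proof (cases "x \<le> 1")
    case True then show ?thesis using A[of x] B[of x] by (cases "x \<le> 1/2") auto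
  next
    case False then show ?thesis using C[of x] by simp
  qed
  have tl: "(hh has_integral (1 - H 1) * mu) {1<..}"
    by (rule has_integral_eq[OF _ has_integral_mult_left[OF tail[of 1]]]) (auto simp: hh_def w_def)
  have "(hh has_integral (Hh 1 + (1 - H 1) * mu)) ({..1} \<union> {1<..})"
  proof (rule has_integral_Un[OF Hhint tl])
    have "{..1::real} \<inter> {1<..} = {}" by auto
    then show "negligible ({..1::real} \<inter> {1<..})" by simp
  qed
  moreover have "{..1} \<union> {1<..} = (UNIV :: real set)" by auto
  moreover have "Hh 1 + (1 - H 1) * mu = 1"
    using muT by (simp add: Hh_def D_def algebra_simps)
  ultimately have hhT: "(hh has_integral 1) UNIV" by simp
  have cdf: "cdf_with_density Hh hh"
    unfolding cdf_with_density_def using hhpos hhT Hhint by blast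
  have pol: "greater_polarisation Hh H"
    unfolding greater_polarisation_def
  proof (intro conjI allI impI)
    fix x :: real assume "x \<le> 1/2" then show "H x \<le> Hh x" by (simp add: Hh_def)
  next
    fix x :: real assume x: "1/2 \<le> x"
    show "Hh x \<le> H x"
    proof (cases "x \<le> 1")
      case True
      have "lam * (H x - H (1/2)) \<le> 1 * (H x - H (1/2))"
        using lam1 Hmono[OF x] by (intro mult_right_mono) auto
      then show ?thesis using True x by (auto simp: Hh_def)
    next
      case False
      have q: "(H x - H 1) / (1 - H 1) \<le> 1" using Hle1[of x] H1lt by simp
      have "(mu - 1) * (H x - H 1) = D * ((H x - H 1) / (1 - H 1))" by (simp add: mu_def)
      also have "\<dots> \<le> D * 1" using D0 q by (intro mult_left_mono) auto
      finally have "(mu - 1) * (H x - H 1) \<le> D" by simp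
      then show ?thesis using False x by (auto simp: Hh_def D_def algebra_simps)
    qed
  qed
  have int_eq: "integral {1/2..1} (\<lambda>x. k x * g x * hh x) = lam * integral {1/2..1} (\<lambda>x. k x * g x * h x)"
    for g :: "real \<Rightarrow> real"
  proof -
    have "integral {1/2..1} (\<lambda>x. k x * g x * hh x) = integral {1/2..1} (\<lambda>x. lam * (k x * g x * h x))"
      by (rule integral_spike[OF negligible_sing[of "1/2"]]) (auto simp: hh_def w_def)
    then show ?thesis by simp
  qed
  have Hh12: "Hh (1/2) = H (1/2)" by (simp add: Hh_def)
  have "V0_star F0 F1 f0 f1 Hh hh = H (1/2) + lam * I0"
    unfolding V0_star_def Hh12 k_def[symmetric] I0_def using int_eq[of "\<lambda>x. 1 - x"] by simp
  moreover have "V1_star F0 F1 f0 f1 Hh hh = H (1/2) + lam * I1"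
    unfolding V1_star_def Hh12 k_def[symmetric] I1_def using int_eq[of "\<lambda>x. x"] by simp
  ultimately show ?thesis using cdf pol lamI0 lamI1 by (intro exI[of _ Hh] exI[of _ hh]) (simp add: c_def)
qed

end
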